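(* Let $S\subset\mathbb{R}^n_+$ be compact and convex with $0\in S$. Then for every $z\in\mathbb{C}^{*n}$ and $w\in\mathbb{C}^n$, $$H_S(z+w)\le H_S(z)+\varphi_S\big(|w_1|/|z_1|,\dots,|w_n|/|z_n|\big),$$ and in particular, for every $w\in\overline{\mathbb{D}}^n$ and $\delta\in\,]0,1[$, $H_S(\mathbf{1}+\delta w)\le\delta\sigma_S$. Furthermore, for every $z\in\mathbb{C}^{*n}$ and $w\in\mathbb{C}^n$, $$H_S(z+w)\le H_S(z)+\varphi_S\big(\log^+(|w_1|/|z_1|),\dots,\log^+(|w_n|/|z_n|)\big)+(\log2)\,\sigma_S.$$
   Context: $\mathbb{R}_+=[0,\infty)$, $\mathbb{C}^*=\mathbb{C}\setminus\{0\}$, $\mathbb{C}^{*n}=(\mathbb{C}^* )^n$, $\mathbb{D}$ is the open unit disc in $\mathbb{C}$, $\mathbf{1}=(1,\dots,1)$. For compact $S\subset\mathbb{R}^n_+$, $\varphi_S(\xi)=\max_{s\in S}\langle s,\xi\rangle$ for $\xi\in\mathbb{R}^n$ (supporting function), and $\sigma_S=\varphi_S(\mathbf{1})$. The logarithmic supporting function $H_S\colon\mathbb{C}^n\to\mathbb{R}_+$ is $H_S(z)=\varphi_S(\log|z_1|,\dots,\log|z_n|)$ for $z\in\mathbb{C}^{*n}$, and $H_S(z)=\limsup_{\mathbb{C}^{*n}\ni w\to z}H_S(w)$ for $z\in\mathbb{C}^n\setminus\mathbb{C}^{*n}$. *)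

theory Defs
  imports "HOL-Analysis.Analysis" "HOL-Library.Liminf_Limsup"
begin

definition supp_fun :: "(real^'n) set \<Rightarrow> real^'n \<Rightarrow> real" where
  "supp_fun S \<xi> = (SUP s\<in>S. s \<bullet> \<xi>)"

definition sigma_S :: "(real^'n) set \<Rightarrow> real" where
  "sigma_S S = supp_fun S (\<chi> i. 1)"

definition cstar :: "(complex^'n) set" where
  "cstar = {z. \<forall>i. z $ i \<noteq> 0}"

definition log_abs :: "complex^'n \<Rightarrow> real^'n" where
  "log_abs z = (\<chi> i. ln (cmod (z $ i)))"

definition H_S :: "(real^'n) set \<Rightarrow> complex^'n \<Rightarrow> real" where
  "H_S S z = (if z \<in> cstar then supp_fun S (log_abs z)
     else real_of_ereal (Limsup (at z within cstar) (\<lambda>w. ereal (supp_fun S (log_abs w)))))"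

definition logplus :: "real \<Rightarrow> real" where
  "logplus x = max 0 (ln x)"

end

theory Submission
  imports Defs
begin

locale suppS =
  fixes S :: "(real^'n) set"
  assumes cpt: "compact S" and zS: "0 \<in> S" and nn: "\<forall>s\<in>S. \<forall>i. s $ i \<ge> 0"
begin

lemma bnd: "\<exists>B\<ge>0. \<forall>s\<in>S. norm s \<le> B"
proof -
  obtain B where "\<forall>s\<in>S. norm s \<le> B" using compact_imp_bounded[OF cpt] bounded_iff by blast
  then show ?thesis using zS by force
qed

lemma bdd: "bdd_above ((\<lambda>s. s \<bullet> \<xi>) ` S)"
proof -
  obtain B where B: "B \<ge> 0" "\<And>s. s \<in> S \<Longrightarrow> norm s \<le> B" using bnd by blast
  have "s \<bullet> \<xi> \<le> B * norm \<xi>" if "s \<in> S" for s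
  proof -
    have "s \<bullet> \<xi> \<le> norm s * norm \<xi>" by (metis Cauchy_Schwarz_ineq2 abs_le_D1)
    also have "\<dots> \<le> B * norm \<xi>" using B that by (simp add: mult_right_mono)
    finally show ?thesis .
  qed
  then show ?thesis by (auto intro!: bdd_aboveI2)
qed

lemma upper: "s \<in> S \<Longrightarrow> s \<bullet> \<xi> \<le> supp_fun S \<xi>"
  unfolding supp_fun_def by (rule cSUP_upper[OF _ bdd])

lemma least: "(\<And>s. s \<in> S \<Longrightarrow> s \<bullet> \<xi> \<le> c) \<Longrightarrow> supp_fun S \<xi> \<le> c"
  unfolding supp_fun_def using zS by (intro cSUP_least) auto

lemma nonneg: "0 \<le> supp_fun S \<xi>"
  using upper[OF zS, of \<xi>] by simp

lemma zero: "supp_fun S 0 = 0"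
  using nonneg[of 0] least[of 0 0] by simp

lemma mono: assumes "\<And>i. a $ i \<le> b $ i" shows "supp_fun S a \<le> supp_fun S b"
proof (rule least)
  fix s assume s: "s \<in> S"
  have "s \<bullet> a \<le> s \<bullet> b"
    unfolding inner_vec_def using assms nn s
    by (intro sum_mono) (simp add: mult_left_mono)
  also have "\<dots> \<le> supp_fun S b" by (rule upper[OF s])
  finally show "s \<bullet> a \<le> supp_fun S b" .
qed

lemma subadd: "supp_fun S (a + b) \<le> supp_fun S a + supp_fun S b"
proof (rule least)
  fix s assume s: "s \<in> S"
  show "s \<bullet> (a + b) \<le> supp_fun S a + supp_fun S b"
    using upper[OF s, of a] upper[OF s, of b] by (simp add: inner_add_right)
qed

lemma scale: assumes "c \<ge> 0" shows "supp_fun S (c *\<^sub>R a) \<le> c * supp_fun S a"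
proof (rule least)
  fix s assume s: "s \<in> S"
  show "s \<bullet> (c *\<^sub>R a) \<le> c * supp_fun S a"
    using upper[OF s, of a] assms by (simp add: mult_left_mono)
qed

lemma cont: "continuous_on UNIV (supp_fun S)"
proof -
  obtain B where B: "B \<ge> 0" "\<And>s. s \<in> S \<Longrightarrow> norm s \<le> B" using bnd by blast
  have L: "supp_fun S a \<le> supp_fun S b + B * dist a b" for a b
  proof (rule least)
    fix s assume s: "s \<in> S"
    have "s \<bullet> a = s \<bullet> b + s \<bullet> (a - b)" by (simp add: inner_diff_right)
    also have "s \<bullet> (a - b) \<le> norm s * norm (a - b)" by (metis Cauchy_Schwarz_ineq2 abs_le_D1)
    also have "\<dots> \<le> B * dist a b" using B s by (simp add: dist_norm mult_right_mono)
    finally show "s \<bullet> a \<le> supp_fun S b + B * dist a b" using upper[OF s, of b] by linarith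
  qed
  have "dist (supp_fun S a) (supp_fun S b) \<le> B * dist a b" for a b
    using L[of a b] L[of b a] by (simp add: dist_real_def dist_commute abs_le_iff)
  then have "B-lipschitz_on UNIV (supp_fun S)" by (intro lipschitz_onI) (auto simp: B)
  then show ?thesis by (rule lipschitz_on_continuous_on)
qed

definition G :: "complex^'n \<Rightarrow> complex^'n \<Rightarrow> real" where
  "G z w = supp_fun S (log_abs z) + supp_fun S (\<chi> i. ln (1 + cmod (w $ i) / cmod (z $ i)))"

lemma key: assumes z: "z \<in> cstar" and u: "z + w \<in> cstar"
  shows "supp_fun S (log_abs (z + w)) \<le> G z w"
proof -
  have "ln (cmod (z $ i + w $ i)) \<le> ln (cmod (z $ i)) + ln (1 + cmod (w $ i) / cmod (z $ i))" for i
  proof -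
    have zi: "cmod (z $ i) > 0" using z by (simp add: cstar_def)
    have ui: "cmod (z $ i + w $ i) > 0" using u by (simp add: cstar_def)
    have "cmod (z $ i + w $ i) \<le> cmod (z $ i) * (1 + cmod (w $ i) / cmod (z $ i))"
    proof -
      have "cmod (z $ i) * (1 + cmod (w $ i) / cmod (z $ i)) = cmod (z $ i) + cmod (w $ i)"
        using zi by (simp add: field_simps)
      then show ?thesis using norm_triangle_ineq[of "z $ i" "w $ i"] by simp
    qed
    then have "ln (cmod (z $ i + w $ i)) \<le> ln (cmod (z $ i) * (1 + cmod (w $ i) / cmod (z $ i)))"
      using ui by (intro ln_mono) auto
    also have "\<dots> = ln (cmod (z $ i)) + ln (1 + cmod (w $ i) / cmod (z $ i))"
      using zi by (intro ln_mult_pos) (auto intro: add_pos_nonneg)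
    finally show ?thesis .
  qed
  then have "supp_fun S (log_abs (z + w)) \<le> supp_fun S (log_abs z + (\<chi> i. ln (1 + cmod (w $ i) / cmod (z $ i))))"
    by (intro mono) (simp add: log_abs_def)
  also have "\<dots> \<le> G z w" unfolding G_def by (rule subadd)
  finally show ?thesis .
qed

lemma G_nonneg: "z \<in> cstar \<Longrightarrow> 0 \<le> G z w"
  unfolding G_def using nonneg by (simp add: add_nonneg_nonneg)

lemma HG: assumes z: "z \<in> cstar" shows "H_S S (z + w) \<le> G z w"
proof (cases "z + w \<in> cstar")
  case True
  then show ?thesis using key[OF z True] by (simp add: H_S_def)
next
  case False
  let ?F = "at (z + w) within cstar"
  let ?g = "\<lambda>u. G z (u - z)"
  have ev: "eventually (\<lambda>u. ereal (supp_fun S (log_abs u)) \<le> ereal (?g u)) ?F"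
    unfolding eventually_at_filter
    by (intro always_eventually allI impI) (use key[OF z, of "_ - z"] in auto)
  have nz: "1 + cmod x / cmod (z $ i) \<noteq> 0" "z $ i \<noteq> 0" for x i
    using z by (auto simp: cstar_def) (smt (verit) norm_ge_zero divide_nonneg_nonneg)
  have gc: "continuous_on UNIV ?g"
    unfolding G_def
    by (intro continuous_on_add continuous_on_const continuous_on_compose2[OF cont]
        continuous_on_vec_lambda continuous_intros) (auto simp: nz)
  have "(?g \<longlongrightarrow> ?g (z + w)) ?F"
    using gc by (metis UNIV_I continuous_on_def tendsto_within_subset subset_UNIV)
  then have lim: "((\<lambda>u. ereal (?g u)) \<longlongrightarrow> ereal (G z w)) ?F" by (simp add: tendsto_ereal)
  have L: "Limsup ?F (\<lambda>u. ereal (supp_fun S (log_abs u))) \<le> ereal (G z w)"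
  proof (cases "?F = bot")
    case True then show ?thesis by simp
  next
    case nt: False
    have "Limsup ?F (\<lambda>u. ereal (supp_fun S (log_abs u))) \<le> Limsup ?F (\<lambda>u. ereal (?g u))"
      by (rule Limsup_mono[OF ev])
    also have "\<dots> = ereal (G z w)" by (rule lim_imp_Limsup[OF nt lim])
    finally show ?thesis .
  qed
  have "real_of_ereal (Limsup ?F (\<lambda>u. ereal (supp_fun S (log_abs u)))) \<le> G z w"
    using L G_nonneg[OF z, of w]
    by (cases "Limsup ?F (\<lambda>u. ereal (supp_fun S (log_abs u)))") auto
  then show ?thesis using False by (simp add: H_S_def)
qed

lemma Hz: "z \<in> cstar \<Longrightarrow> H_S S z = supp_fun S (log_abs z)"
  by (simp add: H_S_def)

lemma part1: assumes z: "z \<in> cstar"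
  shows "H_S S (z + w) \<le> H_S S z + supp_fun S (\<chi> i. cmod (w $ i) / cmod (z $ i))"
proof -
  have "supp_fun S (\<chi> i. ln (1 + cmod (w $ i) / cmod (z $ i))) \<le> supp_fun S (\<chi> i. cmod (w $ i) / cmod (z $ i))"
    by (intro mono) (simp add: ln_add_one_self_le_self)
  then show ?thesis using HG[OF z, of w] by (simp add: G_def Hz[OF z])
qed

lemma part3: assumes z: "z \<in> cstar"
  shows "H_S S (z + w) \<le> H_S S z
              + supp_fun S (\<chi> i. logplus (cmod (w $ i) / cmod (z $ i))) + ln 2 * sigma_S S"
proof -
  have r: "ln (1 + r) \<le> logplus r + ln 2" if "r \<ge> 0" for r :: real
  proof (cases "r \<le> 1")
    case True
    then have "ln (1 + r) \<le> ln 2" using that by simp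
    then show ?thesis by (simp add: logplus_def)
  next
    case False
    then have "ln (1 + r) \<le> ln (2 * r)" by simp
    also have "\<dots> = ln r + ln 2" using False by (simp add: ln_mult)
    finally show ?thesis by (simp add: logplus_def)
  qed
  have "supp_fun S (\<chi> i. ln (1 + cmod (w $ i) / cmod (z $ i)))
      \<le> supp_fun S ((\<chi> i. logplus (cmod (w $ i) / cmod (z $ i))) + ln 2 *\<^sub>R (\<chi> i. 1))"
    by (intro mono) (simp add: r)
  also have "\<dots> \<le> supp_fun S (\<chi> i. logplus (cmod (w $ i) / cmod (z $ i))) + supp_fun S (ln 2 *\<^sub>R (\<chi> i. 1))"
    by (rule subadd)
  also have "supp_fun S (ln 2 *\<^sub>R (\<chi> i. 1)) \<le> ln 2 * sigma_S S"
    unfolding sigma_S_def by (rule scale) simp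
  finally show ?thesis using HG[OF z, of w] by (simp add: G_def Hz[OF z])
qed

lemma part2: assumes "\<forall>i. cmod (w $ i) \<le> 1" "0 < \<delta>" "\<delta> < 1"
  shows "H_S S (\<chi> i. 1 + complex_of_real \<delta> * w $ i) \<le> \<delta> * sigma_S S"
proof -
  have one: "(\<chi> i. (1::complex)) \<in> cstar" by (simp add: cstar_def)
  have e: "(\<chi> i. 1 + complex_of_real \<delta> * w $ i) = (\<chi> i. 1) + (\<chi> i. complex_of_real \<delta> * w $ i)"
    by (simp add: vec_eq_iff)
  have h1: "H_S S (\<chi> i. (1::complex)) = 0"
    using Hz[OF one] zero by (simp add: log_abs_def zero_vec_def)
  have "supp_fun S (\<chi> i. cmod ((\<chi> i. complex_of_real \<delta> * w $ i) $ i) / cmod ((\<chi> i. (1::complex)) $ i))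
      \<le> supp_fun S (\<delta> *\<^sub>R (\<chi> i. 1))"
    using assms by (intro mono) (simp add: norm_mult mult_left_le)
  also have "\<dots> \<le> \<delta> * sigma_S S" unfolding sigma_S_def using assms by (intro scale) simp
  finally show ?thesis using part1[OF one, of "\<chi> i. complex_of_real \<delta> * w $ i"] h1 e by simp
qed

end

theorem proposition3p2:
  fixes S :: "(real^'n) set"
  assumes "compact S" and "convex S" and "0 \<in> S"
    and "\<forall>s\<in>S. \<forall>i. s $ i \<ge> 0"
  shows "(\<forall>z \<in> cstar. \<forall>w :: complex^'n.
            H_S S (z + w) \<le> H_S S z + supp_fun S (\<chi> i. cmod (w $ i) / cmod (z $ i)))
       \<and> (\<forall>w :: complex^'n. \<forall>\<delta> :: real. (\<forall>i. cmod (w $ i) \<le> 1) \<and> 0 < \<delta> \<and> \<delta> < 1 \<longrightarrow>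
            H_S S (\<chi> i. 1 + complex_of_real \<delta> * w $ i) \<le> \<delta> * sigma_S S)
       \<and> (\<forall>z \<in> cstar. \<forall>w :: complex^'n.
            H_S S (z + w) \<le> H_S S z
              + supp_fun S (\<chi> i. logplus (cmod (w $ i) / cmod (z $ i))) + ln 2 * sigma_S S)"
proof -
  interpret suppS S using assms by unfold_locales auto
  show ?thesis using part1 part2 part3 by blast
qed

end
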